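(* Suppose the system is IFS$_m$, with a controller $\Psi:\mathcal{H}_-\to\mathbb{R}^m$ such that $\|\phi(k,\sigma,x_0,\Psi)\|\le C\gamma^k\|x_0\|$ for all $x_0\in\mathbb{R}^n,\sigma\in\Sigma^\omega,k\in\mathbb{N}$, with $C>1$, $\gamma\in[0,1)$. Then there exist a norm $V$ on $\mathbb{R}^n$ satisfying $\|x\|\le V(x)\le\frac{C}{1-\gamma}\|x\|$ for all $x$, and a static feedback $\Phi:\mathbb{R}^n\to\mathbb{R}^m$ that is homogeneous of degree 1 (i.e. $\Phi(\lambda x)=\lambda\Phi(x)$ for all $\lambda\in\mathbb{R}$, $x\in\mathbb{R}^n$) such that $$V(A_ix+B_i\Phi(x))\le\Big(1-\frac{1-\gamma}{C}\Big)V(x)\quad\text{for all }i\in\Sigma,\ x\in\mathbb{R}^n.$$ Consequently the closed loop $x(k+1)=A_{\sigma(k)}x(k)+B_{\sigma(k)}\Phi(x(k))$ is uniformly exponentially stable.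
   Context: Let $\Sigma$ be a finite nonempty set and $\{(A_i,B_i)\in\mathbb{R}^{n\times n}\times\mathbb{R}^{n\times m} : i\in\Sigma\}$. Consider $x(k+1)=A_{\sigma(k)}x(k)+B_{\sigma(k)}u(k)$, $k\in\mathbb{N}=\{0,1,\dots\}$, with arbitrary switching signal $\sigma:\mathbb{N}\to\Sigma$ (set of all such: $\Sigma^\omega$). $\|\cdot\|$ is the Euclidean norm. $\mathcal{H}_-$ is the set of all tuples $(x_k,\dots,x_0;\,i_{k-1},\dots,i_0)$ with $k\in\mathbb{N}$, $x_j\in\mathbb{R}^n$, $i_j\in\Sigma$ (mode string empty when $k=0$). For a function $\Psi:\mathcal{H}_-\to\mathbb{R}^m$ (a current-mode-independent controller with memory), $\phi(k,\sigma,x_0,\Psi)$ denotes the closed-loop trajectory defined by $x(0)=x_0$ and $x(k+1)=A_{\sigma(k)}x(k)+B_{\sigma(k)}\Psi(x(k),\dots,x(0);\,\sigma(k-1),\dots,\sigma(0))$. The system is IFS$_m$ if there exists such $\Psi$ with constants $M>0,\gamma\in[0,1)$ such that $\|\phi(k,\sigma,x_0,\Psi)\|\le M\gamma^k\|x_0\|$ for all $x_0,\sigma,k$. A closed loop is uniformly exponentially stable if there exist $M>0,\gamma\in[0,1)$ with $\|x(k)\|\le M\gamma^k\|x(0)\|$ for all initial states, all $\sigma\in\Sigma^\omega$ and all $k\in\mathbb{N}$. *)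

theory Defs
  imports "HOL-Analysis.Analysis"
begin

text \<open>The mode set Sigma is the finite (nonempty) type 'i; switching signals are
  arbitrary functions nat => 'i.  A history (x_k,...,x_0; i_(k-1),...,i_0) is
  a pair of lists [x_k,...,x_0] and [i_(k-1),...,i_0].\<close>

fun cl_hist ::
  "('i \<Rightarrow> real^'n^'n) \<Rightarrow> ('i \<Rightarrow> real^'m^'n) \<Rightarrow>
   ((real^'n) list \<Rightarrow> 'i list \<Rightarrow> real^'m) \<Rightarrow> (nat \<Rightarrow> 'i) \<Rightarrow> real^'n \<Rightarrow> nat \<Rightarrow> (real^'n) list"
where
  "cl_hist A B Psi \<sigma> x0 0 = [x0]"
| "cl_hist A B Psi \<sigma> x0 (Suc k) =
     (let h = cl_hist A B Psi \<sigma> x0 k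
      in (A (\<sigma> k) *v hd h + B (\<sigma> k) *v Psi h (rev (map \<sigma> [0..<k]))) # h)"

definition phi ::
  "('i \<Rightarrow> real^'n^'n) \<Rightarrow> ('i \<Rightarrow> real^'m^'n) \<Rightarrow>
   nat \<Rightarrow> (nat \<Rightarrow> 'i) \<Rightarrow> real^'n \<Rightarrow> ((real^'n) list \<Rightarrow> 'i list \<Rightarrow> real^'m) \<Rightarrow> real^'n"
where
  "phi A B k \<sigma> x0 Psi = hd (cl_hist A B Psi \<sigma> x0 k)"

fun static_traj ::
  "('i \<Rightarrow> real^'n^'n) \<Rightarrow> ('i \<Rightarrow> real^'m^'n) \<Rightarrow>
   (real^'n \<Rightarrow> real^'m) \<Rightarrow> (nat \<Rightarrow> 'i) \<Rightarrow> real^'n \<Rightarrow> nat \<Rightarrow> real^'n"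
where
  "static_traj A B Phi \<sigma> x0 0 = x0"
| "static_traj A B Phi \<sigma> x0 (Suc k) =
     (let x = static_traj A B Phi \<sigma> x0 k in A (\<sigma> k) *v x + B (\<sigma> k) *v Phi x)"

definition is_norm :: "(real^'n \<Rightarrow> real) \<Rightarrow> bool" where
  "is_norm V \<longleftrightarrow> (\<forall>x. V x \<ge> 0) \<and> (\<forall>x. V x = 0 \<longleftrightarrow> x = 0) \<and>
     (\<forall>c x. V (c *\<^sub>R x) = \<bar>c\<bar> * V x) \<and> (\<forall>x y. V (x + y) \<le> V x + V y)"

end

theory Submission
  imports Defs
begin

fun ptraj :: "('i \<Rightarrow> real^'n^'n) \<Rightarrow> ('i \<Rightarrow> real^'m^'n) \<Rightarrow> ('i list \<Rightarrow> real^'m) \<Rightarrow> (nat \<Rightarrow> 'i) \<Rightarrow> real^'n \<Rightarrow> nat \<Rightarrow> real^'n"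
where
  "ptraj A B u \<sigma> x 0 = x"
| "ptraj A B u \<sigma> x (Suc k) = A (\<sigma> k) *v ptraj A B u \<sigma> x k + B (\<sigma> k) *v u (map \<sigma> [0..<k])"

definition achieves :: "('i \<Rightarrow> real^'n^'n) \<Rightarrow> ('i \<Rightarrow> real^'m^'n) \<Rightarrow> real^'n \<Rightarrow> ('i list \<Rightarrow> real^'m) \<Rightarrow> real \<Rightarrow> bool"
  where "achieves A B x u c \<longleftrightarrow> (\<forall>\<sigma> N. (\<Sum>k<N. norm (ptraj A B u \<sigma> x k)) \<le> c)"

definition Vf :: "('i \<Rightarrow> real^'n^'n) \<Rightarrow> ('i \<Rightarrow> real^'m^'n) \<Rightarrow> real^'n \<Rightarrow> real"
  where "Vf A B x = Inf {c. \<exists>u. achieves A B x u c}"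

lemma ptraj_scale: "ptraj A B (\<lambda>w. t *\<^sub>R u w) \<sigma> (t *\<^sub>R x) k = t *\<^sub>R ptraj A B u \<sigma> x k"
  by (induction k) (simp_all add: linear_scale linear_add scaleR_right_distrib)

lemma ptraj_add: "ptraj A B (\<lambda>w. u1 w + u2 w) \<sigma> (x + y) k = ptraj A B u1 \<sigma> x k + ptraj A B u2 \<sigma> y k"
  by (induction k) (simp_all add: linear_add algebra_simps)

lemma ptraj_shift:
  "ptraj A B (\<lambda>w. u (i # w)) \<sigma>' (A i *v x + B i *v u []) k = ptraj A B u (case_nat i \<sigma>') x (Suc k)"
proof (induction k)
  case 0 then show ?case by simp
next
  case (Suc k)
  have "map (case_nat i \<sigma>') [0..<Suc k] = i # map \<sigma>' [0..<k]"
    by (simp only: map_upt_Suc) simp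
  then show ?case using Suc by simp
qed

lemma achieves_mono: "achieves A B x u c \<Longrightarrow> c \<le> d \<Longrightarrow> achieves A B x u d"
  unfolding achieves_def by (meson order_trans)

lemma achieves_norm: "achieves A B x u c \<Longrightarrow> norm x \<le> c"
  unfolding achieves_def by (erule allE[where x=undefined], erule allE[where x=1]) simp

lemma achieves_scale: "achieves A B x u c \<Longrightarrow> achieves A B (t *\<^sub>R x) (\<lambda>w. t *\<^sub>R u w) (\<bar>t\<bar> * c)"
  unfolding achieves_def
proof (intro allI)
  fix \<sigma> N assume h: "\<forall>\<sigma> N. (\<Sum>k<N. norm (ptraj A B u \<sigma> x k)) \<le> c"
  have "(\<Sum>k<N. norm (ptraj A B (\<lambda>w. t *\<^sub>R u w) \<sigma> (t *\<^sub>R x) k)) = \<bar>t\<bar> * (\<Sum>k<N. norm (ptraj A B u \<sigma> x k))"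
    by (simp add: ptraj_scale sum_distrib_left)
  also have "\<dots> \<le> \<bar>t\<bar> * c" using h by (simp add: mult_left_mono)
  finally show "(\<Sum>k<N. norm (ptraj A B (\<lambda>w. t *\<^sub>R u w) \<sigma> (t *\<^sub>R x) k)) \<le> \<bar>t\<bar> * c" .
qed

lemma achieves_add: "achieves A B x u1 c1 \<Longrightarrow> achieves A B y u2 c2 \<Longrightarrow> achieves A B (x + y) (\<lambda>w. u1 w + u2 w) (c1 + c2)"
  unfolding achieves_def
proof (intro allI)
  fix \<sigma> N assume h1: "\<forall>\<sigma> N. (\<Sum>k<N. norm (ptraj A B u1 \<sigma> x k)) \<le> c1"
    and h2: "\<forall>\<sigma> N. (\<Sum>k<N. norm (ptraj A B u2 \<sigma> y k)) \<le> c2"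
  have "(\<Sum>k<N. norm (ptraj A B (\<lambda>w. u1 w + u2 w) \<sigma> (x + y) k)) \<le> (\<Sum>k<N. norm (ptraj A B u1 \<sigma> x k) + norm (ptraj A B u2 \<sigma> y k))"
    by (rule sum_mono) (simp add: ptraj_add norm_triangle_ineq)
  also have "\<dots> \<le> c1 + c2" using h1 h2 by (simp add: sum.distrib add_mono)
  finally show "(\<Sum>k<N. norm (ptraj A B (\<lambda>w. u1 w + u2 w) \<sigma> (x + y) k)) \<le> c1 + c2" .
qed

lemma achieves_step: "achieves A B x u c \<Longrightarrow> achieves A B (A i *v x + B i *v u []) (\<lambda>w. u (i # w)) (c - norm x)"
  unfolding achieves_def
proof (intro allI)
  fix \<sigma>' N assume h: "\<forall>\<sigma> N. (\<Sum>k<N. norm (ptraj A B u \<sigma> x k)) \<le> c"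
  have "(\<Sum>k<Suc N. norm (ptraj A B u (case_nat i \<sigma>') x k)) = norm x + (\<Sum>k<N. norm (ptraj A B u (case_nat i \<sigma>') x (Suc k)))"
    by (simp only: sum.lessThan_Suc_shift) simp
  then show "(\<Sum>k<N. norm (ptraj A B (\<lambda>w. u (i # w)) \<sigma>' (A i *v x + B i *v u []) k)) \<le> c - norm x"
    using h[rule_format, of "case_nat i \<sigma>'" "Suc N"] by (simp add: ptraj_shift)
qed

lemma Vf_ne: assumes ex: "\<And>x. \<exists>u c. achieves A B x u c"
  shows "{c. \<exists>u. achieves A B x u c} \<noteq> {}"
  using ex[of x] by auto

lemma Vf_bdd: "bdd_below {c. \<exists>u. achieves A B x u c}"
  by (rule bdd_belowI[where m="norm x"]) (auto intro: achieves_norm)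

lemma Vf_le: "achieves A B x u c \<Longrightarrow> Vf A B x \<le> c"
  unfolding Vf_def by (rule cInf_lower[OF _ Vf_bdd]) auto

lemma Vf_greatest: assumes ex: "\<And>x. \<exists>u c. achieves A B x u c"
  and "\<And>u c. achieves A B x u c \<Longrightarrow> d \<le> c" shows "d \<le> Vf A B x"
  unfolding Vf_def by (rule cInf_greatest[OF Vf_ne[OF ex]]) (use assms in auto)

lemma Vf_ge_norm: assumes ex: "\<And>x. \<exists>u c. achieves A B x u c"
  shows "norm x \<le> Vf A B x"
  by (rule Vf_greatest[OF ex]) (rule achieves_norm)

lemma Vf_approx: assumes ex: "\<And>x. \<exists>u c. achieves A B x u c" and "Vf A B x < z"
  shows "\<exists>u c. achieves A B x u c \<and> c < z"
  using cInf_lessD[OF Vf_ne[OF ex], of x z] assms(2) unfolding Vf_def by auto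

lemma Vf_scale_le: assumes ex: "\<And>x. \<exists>u c. achieves A B x u c" and t: "t \<noteq> 0"
  shows "Vf A B (t *\<^sub>R x) \<le> \<bar>t\<bar> * Vf A B x"
proof -
  have "Vf A B (t *\<^sub>R x) / \<bar>t\<bar> \<le> Vf A B x"
  proof (rule Vf_greatest[OF ex])
    fix u c assume "achieves A B x u c"
    then have "Vf A B (t *\<^sub>R x) \<le> \<bar>t\<bar> * c" by (rule Vf_le[OF achieves_scale])
    then show "Vf A B (t *\<^sub>R x) / \<bar>t\<bar> \<le> c" using t by (simp add: divide_le_eq mult.commute)
  qed
  then show ?thesis using t by (simp add: divide_le_eq mult.commute)
qed

lemma Vf_zero: assumes ex: "\<And>x. \<exists>u c. achieves A B x u c" shows "Vf A B 0 = 0"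
proof -
  obtain u c where "achieves A B 0 u c" using ex by blast
  then have "achieves A B (0 *\<^sub>R 0) (\<lambda>w. 0 *\<^sub>R u w) (\<bar>0\<bar> * c)" by (rule achieves_scale)
  then have "Vf A B 0 \<le> 0" using Vf_le by fastforce
  moreover have "0 \<le> Vf A B 0" using Vf_ge_norm[OF ex, of 0] by simp
  ultimately show ?thesis by simp
qed

lemma Vf_scale: assumes ex: "\<And>x. \<exists>u c. achieves A B x u c"
  shows "Vf A B (t *\<^sub>R x) = \<bar>t\<bar> * Vf A B x"
proof (cases "t = 0")
  case True then show ?thesis using Vf_zero[OF ex] by simp
next
  case False
  have "Vf A B x = Vf A B (inverse t *\<^sub>R (t *\<^sub>R x))" using False by simp
  also have "\<dots> \<le> \<bar>inverse t\<bar> * Vf A B (t *\<^sub>R x)" using False by (intro Vf_scale_le[OF ex]) simp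
  finally have "\<bar>t\<bar> * Vf A B x \<le> Vf A B (t *\<^sub>R x)" using False
    by (simp add: abs_inverse field_simps)
  then show ?thesis using Vf_scale_le[OF ex False, of x] by simp
qed

lemma Vf_triangle: assumes ex: "\<And>x. \<exists>u c. achieves A B x u c"
  shows "Vf A B (x + y) \<le> Vf A B x + Vf A B y"
proof -
  have "Vf A B (x + y) - Vf A B x \<le> Vf A B y"
  proof (rule Vf_greatest[OF ex])
    fix u2 c2 assume h2: "achieves A B y u2 c2"
    have "Vf A B (x + y) - c2 \<le> Vf A B x"
    proof (rule Vf_greatest[OF ex])
      fix u1 c1 assume "achieves A B x u1 c1"
      then have "Vf A B (x + y) \<le> c1 + c2" by (rule Vf_le[OF achieves_add[OF _ h2]])
      then show "Vf A B (x + y) - c2 \<le> c1" by simp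
    qed
    then show "Vf A B (x + y) - Vf A B x \<le> c2" by simp
  qed
  then show ?thesis by simp
qed

lemma Vf_norm: assumes ex: "\<And>x. \<exists>u c. achieves A B x u c"
  shows "is_norm (Vf A B)"
  unfolding is_norm_def
proof (intro conjI allI)
  fix x show "0 \<le> Vf A B x" using Vf_ge_norm[OF ex, of x] norm_ge_zero[of x] by linarith
  show "Vf A B x = 0 \<longleftrightarrow> x = 0" using Vf_ge_norm[OF ex, of x] Vf_zero[OF ex] by auto
next
  fix c x show "Vf A B (c *\<^sub>R x) = \<bar>c\<bar> * Vf A B x" by (rule Vf_scale[OF ex])
next
  fix x y show "Vf A B (x + y) \<le> Vf A B x + Vf A B y" by (rule Vf_triangle[OF ex])
qed

lemma cl_hist_cong: "(\<And>j. j < k \<Longrightarrow> \<sigma> j = \<sigma>' j) \<Longrightarrow> cl_hist A B Psi \<sigma> x0 k = cl_hist A B Psi \<sigma>' x0 k"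
proof (induction k)
  case 0 then show ?case by simp
next
  case (Suc k)
  have "cl_hist A B Psi \<sigma> x0 k = cl_hist A B Psi \<sigma>' x0 k" using Suc by simp
  moreover have "map \<sigma> [0..<k] = map \<sigma>' [0..<k]" using Suc.prems by simp
  moreover have "\<sigma> k = \<sigma>' k" using Suc.prems by simp
  ultimately show ?case by (simp only: cl_hist.simps Let_def)
qed

lemma ptraj_psi:
  "ptraj A B (\<lambda>w. Psi (cl_hist A B Psi (\<lambda>j. w ! j) x0 (length w)) (rev w)) \<sigma> x0 k = phi A B k \<sigma> x0 Psi"
proof (induction k)
  case 0 then show ?case by (simp add: phi_def)
next
  case (Suc k)
  have "cl_hist A B Psi (\<lambda>j. map \<sigma> [0..<k] ! j) x0 k = cl_hist A B Psi \<sigma> x0 k"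
    by (rule cl_hist_cong) simp
  then show ?case using Suc by (simp add: phi_def Let_def)
qed

lemma psi_sum:
  fixes C \<gamma> :: real
  assumes "C > 1" and "0 \<le> \<gamma>" and "\<gamma> < 1"
    and bound: "\<And>x0 \<sigma> k. norm (phi A B k \<sigma> x0 Psi) \<le> C * \<gamma> ^ k * norm x0"
  shows "(\<Sum>k<N. norm (phi A B k \<sigma> x0 Psi)) \<le> (1 + C * \<gamma> / (1 - \<gamma>)) * norm x0"
proof (cases N)
  case 0
  have "0 \<le> C * \<gamma> / (1 - \<gamma>)" using assms by simp
  then show ?thesis using 0 by simp
next
  case (Suc M)
  have g: "(\<Sum>k<M. \<gamma> ^ k) \<le> 1 / (1 - \<gamma>)"
    using assms by (simp add: sum_gp_strict divide_right_mono)
  have "(\<Sum>k<N. norm (phi A B k \<sigma> x0 Psi)) = norm x0 + (\<Sum>k<M. norm (phi A B (Suc k) \<sigma> x0 Psi))"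
    using Suc by (simp only: sum.lessThan_Suc_shift) (simp add: phi_def)
  also have "\<dots> \<le> norm x0 + (\<Sum>k<M. C * \<gamma> * norm x0 * \<gamma> ^ k)"
  proof (intro add_left_mono sum_mono)
    fix k show "norm (phi A B (Suc k) \<sigma> x0 Psi) \<le> C * \<gamma> * norm x0 * \<gamma> ^ k"
      using bound[of "Suc k" \<sigma> x0] by (simp add: mult_ac)
  qed
  also have "\<dots> = norm x0 + C * \<gamma> * norm x0 * (\<Sum>k<M. \<gamma> ^ k)"
    by (simp add: sum_distrib_left)
  also have "\<dots> \<le> norm x0 + C * \<gamma> * norm x0 * (1 / (1 - \<gamma>))"
    using assms g by (intro add_left_mono mult_left_mono) auto
  also have "\<dots> = (1 + C * \<gamma> / (1 - \<gamma>)) * norm x0" by (simp add: field_simps)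
  finally show ?thesis .
qed

theorem mainTheorem5:
  fixes A :: "'i::finite \<Rightarrow> real^'n^'n"
    and B :: "'i \<Rightarrow> real^'m^'n"
    and Psi :: "(real^'n) list \<Rightarrow> 'i list \<Rightarrow> real^'m"
    and C \<gamma> :: real
  assumes "C > 1" and "0 \<le> \<gamma>" and "\<gamma> < 1"
    and bound: "\<And>x0 \<sigma> k. norm (phi A B k \<sigma> x0 Psi) \<le> C * \<gamma> ^ k * norm x0"
  shows "\<exists>V Phi. is_norm V
          \<and> (\<forall>x. norm x \<le> V x \<and> V x \<le> C / (1 - \<gamma>) * norm x)
          \<and> (\<forall>c x. Phi (c *\<^sub>R x) = c *\<^sub>R Phi x)
          \<and> (\<forall>i x. V (A i *v x + B i *v Phi x) \<le> (1 - (1 - \<gamma>) / C) * V x)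
          \<and> (\<exists>M \<gamma>'. M > 0 \<and> 0 \<le> \<gamma>' \<and> \<gamma>' < 1 \<and>
               (\<forall>x0 \<sigma> k. norm (static_traj A B Phi \<sigma> x0 k) \<le> M * \<gamma>' ^ k * norm x0))"
proof -
  define K where "K = 1 + C * \<gamma> / (1 - \<gamma>)"
  define K' where "K' = C / (1 - \<gamma>)"
  define \<rho> where "\<rho> = 1 - (1 - \<gamma>) / C"
  define \<theta> where "\<theta> = 1 + 1 / K - 1 / K'"
  define V where "V = Vf A B"
  have KK: "K' = K + (C - 1)" unfolding K_def K'_def using assms(3) by (simp add: field_simps)
  have Kpos: "K \<ge> 1" unfolding K_def using assms by simp
  have K'pos: "K' > 0" using KK Kpos assms(1) by simp
  have th: "\<theta> > 1" unfolding \<theta>_def using KK Kpos assms(1) by (simp add: frac_less2)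
  have rho: "\<rho> = 1 - 1 / K'" unfolding \<rho>_def K'_def by simp
  have rho0: "0 \<le> \<rho>" "\<rho> < 1" unfolding \<rho>_def using assms by (simp_all add: field_simps)
  have Vach: "achieves A B x (\<lambda>w. Psi (cl_hist A B Psi (\<lambda>j. w ! j) x (length w)) (rev w)) (K * norm x)" for x
    unfolding achieves_def K_def ptraj_psi by (intro allI psi_sum[OF assms(1-3) bound])
  have ex: "\<And>x. \<exists>u c. achieves A B x u c" using Vach by blast
  have Vup: "V x \<le> K * norm x" for x
    unfolding V_def by (rule Vf_le[OF Vach])
  have Vlo: "norm x \<le> V x" for x unfolding V_def by (rule Vf_ge_norm[OF ex])
  have Vsc: "V (t *\<^sub>R x) = \<bar>t\<bar> * V x" for t x unfolding V_def by (rule Vf_scale[OF ex])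
  define rep where "rep x = (SOME y. y \<noteq> 0 \<and> (\<exists>t. y = t *\<^sub>R x))" for x :: "real^'n"
  define co where "co x = (SOME s. x = s *\<^sub>R rep x)" for x
  define pol where "pol y = (SOME u. achieves A B y u (\<theta> * V y))" for y
  define Phi where "Phi x = (if x = 0 then 0 else co x *\<^sub>R pol (rep x) [])" for x
  have line: "(\<exists>t. y = t *\<^sub>R (c *\<^sub>R x)) \<longleftrightarrow> (\<exists>t. y = t *\<^sub>R x)" if "c \<noteq> 0" for c y and x :: "real^'n"
  proof
    assume "\<exists>t. y = t *\<^sub>R (c *\<^sub>R x)" then show "\<exists>t. y = t *\<^sub>R x" by auto
  next
    assume "\<exists>t. y = t *\<^sub>R x"
    then obtain t where "y = t *\<^sub>R x" by blast
    then have "y = (t / c) *\<^sub>R (c *\<^sub>R x)" using that by simp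
    then show "\<exists>t. y = t *\<^sub>R (c *\<^sub>R x)" by blast
  qed
  have rep_sc: "rep (c *\<^sub>R x) = rep x" if "c \<noteq> 0" for c x
    unfolding rep_def by (simp only: line[OF that])
  have rep_ok: "rep x \<noteq> 0 \<and> (\<exists>t. rep x = t *\<^sub>R x)" if "x \<noteq> 0" for x
  proof -
    have "x \<noteq> 0 \<and> (\<exists>t. x = t *\<^sub>R x)" using that by (metis scaleR_one)
    then show ?thesis unfolding rep_def by (rule someI)
  qed
  have co_ok: "x = co x *\<^sub>R rep x" if nz: "x \<noteq> 0" for x
  proof -
    obtain t where t: "rep x = t *\<^sub>R x" using rep_ok[OF nz] by blast
    then have "t \<noteq> 0" using rep_ok[OF nz] by auto
    then have "x = (1 / t) *\<^sub>R rep x" using t by simp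
    then show ?thesis unfolding co_def by (rule someI)
  qed
  have co_sc: "co (c *\<^sub>R x) = c * co x" if "c \<noteq> 0" "x \<noteq> 0" for c x
  proof -
    have "co (c *\<^sub>R x) *\<^sub>R rep x = c *\<^sub>R x"
      using co_ok[of "c *\<^sub>R x"] that rep_sc[OF that(1)] by simp
    also have "\<dots> = (c * co x) *\<^sub>R rep x" using co_ok[OF that(2)] by (metis scaleR_scaleR)
    finally show ?thesis using rep_ok[OF that(2)] by simp
  qed
  have pol_ok: "achieves A B y (pol y) (\<theta> * V y)" if "y \<noteq> 0" for y
  proof -
    have "0 < V y" using Vlo[of y] that by (metis zero_less_norm_iff order_less_le_trans)
    then have "V y < \<theta> * V y" using th by simp
    then obtain u c where "achieves A B y u c" "c < \<theta> * V y"
      using Vf_approx[OF ex] unfolding V_def by blast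
    then have "achieves A B y u (\<theta> * V y)" by (auto intro: achieves_mono)
    then show ?thesis unfolding pol_def by (rule someI[where P="\<lambda>u. achieves A B y u (\<theta> * V y)"])
  qed
  have hom: "Phi (c *\<^sub>R x) = c *\<^sub>R Phi x" for c x
  proof (cases "c = 0 \<or> x = 0")
    case True then show ?thesis unfolding Phi_def by auto
  next
    case False
    then show ?thesis unfolding Phi_def using co_sc rep_sc by auto
  qed
  have dec: "V (A i *v x + B i *v Phi x) \<le> \<rho> * V x" for i x
  proof (cases "x = 0")
    case True then show ?thesis unfolding Phi_def V_def using Vf_zero[OF ex] by simp
  next
    case False
    have r0: "rep x \<noteq> 0" using rep_ok[OF False] by blast
    have "achieves A B (co x *\<^sub>R rep x) (\<lambda>w. co x *\<^sub>R pol (rep x) w) (\<bar>co x\<bar> * (\<theta> * V (rep x)))"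
      by (rule achieves_scale[OF pol_ok[OF r0]])
    moreover have "\<bar>co x\<bar> * (\<theta> * V (rep x)) = \<theta> * V x"
      using Vsc[of "co x" "rep x"] co_ok[OF False] by simp
    ultimately have a: "achieves A B x (\<lambda>w. co x *\<^sub>R pol (rep x) w) (\<theta> * V x)"
      using co_ok[OF False] by simp
    have "V (A i *v x + B i *v Phi x) \<le> \<theta> * V x - norm x"
      using achieves_step[OF a, of i] False unfolding V_def Phi_def by (simp add: Vf_le)
    also have "\<dots> \<le> \<theta> * V x - V x / K"
      using Vup[of x] Kpos by (simp add: divide_le_eq mult.commute)
    also have "\<dots> = \<rho> * V x" unfolding \<theta>_def rho by (simp add: algebra_simps)
    finally show ?thesis .
  qed
  have traj: "V (static_traj A B Phi \<sigma> x0 k) \<le> \<rho> ^ k * V x0" for \<sigma> x0 k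
  proof (induction k)
    case 0 then show ?case by simp
  next
    case (Suc k)
    have "V (static_traj A B Phi \<sigma> x0 (Suc k)) \<le> \<rho> * V (static_traj A B Phi \<sigma> x0 k)"
      by (simp add: Let_def dec)
    also have "\<dots> \<le> \<rho> * (\<rho> ^ k * V x0)" using Suc rho0 by (simp add: mult_left_mono)
    finally show ?case by simp
  qed
  have stab: "norm (static_traj A B Phi \<sigma> x0 k) \<le> K' * \<rho> ^ k * norm x0" for \<sigma> x0 k
  proof -
    have "norm (static_traj A B Phi \<sigma> x0 k) \<le> \<rho> ^ k * V x0" using Vlo traj order_trans by blast
    also have "\<dots> \<le> \<rho> ^ k * (K' * norm x0)"
    proof (rule mult_left_mono)
      have "K * norm x0 \<le> K' * norm x0" using KK assms(1) by (intro mult_right_mono) auto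
      then show "V x0 \<le> K' * norm x0" using Vup[of x0] by linarith
    qed (use rho0 in simp)
    finally show ?thesis by (simp add: mult_ac)
  qed
  have bnds: "norm x \<le> V x \<and> V x \<le> C / (1 - \<gamma>) * norm x" for x
  proof -
    have "K * norm x \<le> K' * norm x" using KK assms(1) by (intro mult_right_mono) auto
    then show ?thesis using Vlo[of x] Vup[of x] unfolding K'_def by linarith
  qed
  have h1: "is_norm V" unfolding V_def by (rule Vf_norm[OF ex])
  have h2: "\<forall>x. norm x \<le> V x \<and> V x \<le> C / (1 - \<gamma>) * norm x" using bnds by blast
  have h3: "\<forall>c x. Phi (c *\<^sub>R x) = c *\<^sub>R Phi x" using hom by blast
  have h4: "\<forall>i x. V (A i *v x + B i *v Phi x) \<le> (1 - (1 - \<gamma>) / C) * V x"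
    using dec unfolding \<rho>_def by blast
  have h5: "\<exists>M \<gamma>'. M > 0 \<and> 0 \<le> \<gamma>' \<and> \<gamma>' < 1 \<and>
               (\<forall>x0 \<sigma> k. norm (static_traj A B Phi \<sigma> x0 k) \<le> M * \<gamma>' ^ k * norm x0)"
    by (rule exI[of _ K'], rule exI[of _ \<rho>]) (use K'pos rho0 stab in blast)
  show ?thesis by (rule exI[of _ V], rule exI[of _ Phi], intro conjI h1 h2 h3 h4 h5)
qed

end
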